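(* Let $P,Q\in\mathbb P_d$ and let $R=\big[\gamma^{\mathrm{BW}}_{P^{-1}Q^{-1}}(t)\big]^{-1}$ for some $t\in[0,1]$. Then $\operatorname{F}_R(P,Q)=\operatorname{F}^{\mathrm U}(P,Q)$.
   Context: $\mathbb P_d$ is the set of $d\times d$ complex positive definite matrices; $A\#B:=A^{1/2}(A^{-1/2}BA^{-1/2})^{1/2}A^{1/2}$. The Bures–Wasserstein geodesic between $A,B\in\mathbb P_d$ is $\gamma^{\mathrm{BW}}_{AB}(t):=[(1-t)\mathbb I+t\,A^{-1}\#B]\,A\,[(1-t)\mathbb I+t\,A^{-1}\#B]$, $t\in[0,1]$. The generalized fidelity is $\operatorname{F}_R(P,Q):=\operatorname{Tr}\big[\sqrt{R^{1/2}PR^{1/2}}\,R^{-1}\sqrt{R^{1/2}QR^{1/2}}\big]$ and the Uhlmann fidelity is $\operatorname{F}^{\mathrm U}(P,Q):=\operatorname{Tr}\sqrt{P^{1/2}QP^{1/2}}$. *)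

theory Defs
  imports "HOL-Analysis.Analysis"
begin

definition adjoint_mat :: "complex^'d^'d \<Rightarrow> complex^'d^'d" where
  "adjoint_mat A = (\<chi> i j. cnj (A $ j $ i))"

definition hermitian_mat :: "complex^'d^'d \<Rightarrow> bool" where
  "hermitian_mat A \<longleftrightarrow> adjoint_mat A = A"

definition qform :: "complex^'d^'d \<Rightarrow> complex^'d \<Rightarrow> complex" where
  "qform A x = (\<Sum>i\<in>UNIV. cnj (x $ i) * (A *v x) $ i)"

definition pos_def_mat :: "complex^'d^'d \<Rightarrow> bool" where
  "pos_def_mat A \<longleftrightarrow> hermitian_mat A \<and> (\<forall>x. x \<noteq> 0 \<longrightarrow> Re (qform A x) > 0)"

definition pos_semidef_mat :: "complex^'d^'d \<Rightarrow> bool" where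
  "pos_semidef_mat A \<longleftrightarrow> hermitian_mat A \<and> (\<forall>x. Re (qform A x) \<ge> 0)"

definition mat_sqrt :: "complex^'d^'d \<Rightarrow> complex^'d^'d" where
  "mat_sqrt A = (THE B. pos_semidef_mat B \<and> B ** B = A)"

definition geo_mean :: "complex^'d^'d \<Rightarrow> complex^'d^'d \<Rightarrow> complex^'d^'d" where
  "geo_mean A B = (let Ah = mat_sqrt A; Aih = matrix_inv (mat_sqrt A)
                   in Ah ** mat_sqrt (Aih ** B ** Aih) ** Ah)"

definition bw_geodesic :: "complex^'d^'d \<Rightarrow> complex^'d^'d \<Rightarrow> real \<Rightarrow> complex^'d^'d" where
  "bw_geodesic A B t =
     (let M = (1 - t) *\<^sub>R mat 1 + t *\<^sub>R geo_mean (matrix_inv A) B in M ** A ** M)"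

definition gen_fidelity :: "complex^'d^'d \<Rightarrow> complex^'d^'d \<Rightarrow> complex^'d^'d \<Rightarrow> complex" where
  "gen_fidelity R P Q =
     trace (mat_sqrt (mat_sqrt R ** P ** mat_sqrt R) ** matrix_inv R
            ** mat_sqrt (mat_sqrt R ** Q ** mat_sqrt R))"

definition uhlmann_fidelity :: "complex^'d^'d \<Rightarrow> complex^'d^'d \<Rightarrow> complex" where
  "uhlmann_fidelity P Q = trace (mat_sqrt (mat_sqrt P ** Q ** mat_sqrt P))"

end

theory Submission
  imports Defs
begin



definition cinner :: "complex^'d \<Rightarrow> complex^'d \<Rightarrow> complex" where
  "cinner x y = (\<Sum>i\<in>UNIV. cnj (x $ i) * y $ i)"

lemma cinner_add_right: "cinner x (y + z) = cinner x y + cinner x z"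
  by (simp add: cinner_def distrib_left sum.distrib)
lemma cinner_add_left: "cinner (x + y) z = cinner x z + cinner y z"
  by (simp add: cinner_def distrib_right sum.distrib)
lemma cinner_diff_right: "cinner x (y - z) = cinner x y - cinner x z"
  by (simp add: cinner_def right_diff_distrib sum_subtractf)
lemma cinner_diff_left: "cinner (x - y) z = cinner x z - cinner y z"
  by (simp add: cinner_def left_diff_distrib sum_subtractf)
lemma cinner_scale_right: "cinner x (c *s y) = c * cinner x y"
  by (simp add: cinner_def sum_distrib_left algebra_simps)
lemma cinner_scale_left: "cinner (c *s x) y = cnj c * cinner x y"
  by (simp add: cinner_def sum_distrib_left algebra_simps)
lemma cinner_zero_right[simp]: "cinner x 0 = 0" by (simp add: cinner_def)
lemma cinner_zero_left[simp]: "cinner 0 x = 0" by (simp add: cinner_def)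
lemma cinner_sum_right: "cinner x (\<Sum>e\<in>E. f e) = (\<Sum>e\<in>E. cinner x (f e))"
  by (induct E rule: infinite_finite_induct) (auto simp: cinner_add_right)
lemma cinner_sum_left: "cinner (\<Sum>e\<in>E. f e) x = (\<Sum>e\<in>E. cinner (f e) x)"
  by (induct E rule: infinite_finite_induct) (auto simp: cinner_add_left)
lemma cinner_cnj: "cnj (cinner x y) = cinner y x"
  by (simp add: cinner_def mult.commute)

lemma cinner_self: "cinner x x = of_real ((norm x)^2)"
proof -
  have "cinner x x = (\<Sum>i\<in>UNIV. of_real ((norm (x$i))^2))"
    unfolding cinner_def by (intro sum.cong refl) (simp add: complex_norm_square mult.commute del: of_real_power)
  also have "\<dots> = of_real (\<Sum>i\<in>UNIV. (norm (x$i))^2)" by simp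
  also have "(\<Sum>i\<in>UNIV. (norm (x$i))^2) = (norm x)^2"
    by (simp add: norm_vec_def L2_set_def sum_nonneg)
  finally show ?thesis .
qed

lemma cinner_self_eq0: "cinner x x = 0 \<longleftrightarrow> x = 0"
  by (simp add: cinner_self)

lemma cinner_adj: "cinner x (A *v y) = cinner (adjoint_mat A *v x) y"
proof -
  have "cinner x (A *v y) = (\<Sum>i\<in>UNIV. \<Sum>j\<in>UNIV. cnj (x$i) * A$i$j * y$j)"
    unfolding cinner_def matrix_vector_mult_def by (simp add: sum_distrib_left mult.assoc)
  also have "\<dots> = (\<Sum>j\<in>UNIV. \<Sum>i\<in>UNIV. cnj (x$i) * A$i$j * y$j)" by (rule sum.swap)
  also have "\<dots> = cinner (adjoint_mat A *v x) y"
    unfolding cinner_def matrix_vector_mult_def adjoint_mat_def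
    by (simp add: sum_distrib_left cnj_sum mult.commute mult.left_commute)
  finally show ?thesis .
qed

lemma herm_cinner: "hermitian_mat A \<Longrightarrow> cinner x (A *v y) = cinner (A *v x) y"
  by (simp add: cinner_adj hermitian_mat_def)

lemma qform_cinner: "qform A x = cinner x (A *v x)"
  by (simp add: qform_def cinner_def)

lemma herm_qform_real: "hermitian_mat A \<Longrightarrow> qform A x = of_real (Re (qform A x))"
  proof -
  assume h: "hermitian_mat A"
  have "cnj (qform A x) = qform A x"
    by (simp add: qform_cinner cinner_cnj herm_cinner[OF h])
  hence "Im (qform A x) = 0" by (simp add: complex_eq_iff)
  thus ?thesis by (simp add: complex_eq_iff)
qed

lemma adjoint_mult: "adjoint_mat (A ** B) = adjoint_mat B ** adjoint_mat A"
  by (simp add: adjoint_mat_def matrix_matrix_mult_def vec_eq_iff cnj_sum mult.commute)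
lemma adjoint_adjoint[simp]: "adjoint_mat (adjoint_mat A) = A"
  by (simp add: adjoint_mat_def vec_eq_iff)
lemma adjoint_mat1[simp]: "adjoint_mat (mat 1) = mat 1"
  by (simp add: adjoint_mat_def vec_eq_iff mat_def)
lemma adjoint_add: "adjoint_mat (A + B) = adjoint_mat A + adjoint_mat B"
  by (simp add: adjoint_mat_def vec_eq_iff)
lemma adjoint_scaleR: "adjoint_mat (r *\<^sub>R A) = r *\<^sub>R adjoint_mat A"
  by (simp add: adjoint_mat_def vec_eq_iff)

lemma mat_eq_cinner: "(\<forall>x y. cinner x (A *v y) = cinner x (B *v y)) \<Longrightarrow> A = B"
proof -
  assume h: "\<forall>x y. cinner x (A *v y) = cinner x (B *v y)"
  { fix y
    have "cinner (A *v y - B *v y) (A *v y - B *v y) = 0"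
      using h by (simp add: cinner_diff_right cinner_diff_left)
    hence "A *v y = B *v y" by (simp add: cinner_self_eq0) }
  thus ?thesis by (simp add: matrix_eq)
qed

lemma herm_iff: "hermitian_mat A \<longleftrightarrow> (\<forall>x y. cinner x (A *v y) = cinner (A *v x) y)"
proof
  assume "\<forall>x y. cinner x (A *v y) = cinner (A *v x) y"
  hence "\<forall>x y. cinner x (adjoint_mat A *v y) = cinner x (A *v y)"
    by (metis cinner_adj adjoint_adjoint)
  thus "hermitian_mat A" unfolding hermitian_mat_def by (rule mat_eq_cinner)
qed (simp add: herm_cinner)



lemma cinner_scaleR_right: "cinner x (c *\<^sub>R y) = of_real c * cinner x y"
proof -
  have "(c *\<^sub>R y) $ i = of_real c * y $ i" for i
    by (simp only: vector_scaleR_component) (simp only: scaleR_conv_of_real)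
  thus ?thesis by (simp add: cinner_def sum_distrib_left mult_ac)
qed

lemma mv_scale: fixes A :: "complex^'d^'d" shows "A *v (c *s z) = c *s (A *v z)"
  apply (simp add: vec_eq_iff matrix_vector_mult_def sum_distrib_left)
  apply (intro allI sum.cong refl)
  apply (simp add: ac_simps)
  done

lemma norm_scale: "norm (complex_of_real c *s z) = \<bar>c\<bar> * norm z"
proof -
  have "cinner (complex_of_real c *s z) (complex_of_real c *s z) = of_real (c^2) * cinner z z"
    by (simp add: cinner_scale_left cinner_scale_right power2_eq_square)
  hence "(norm (complex_of_real c *s z))^2 = c^2 * (norm z)^2"
    by (simp only: cinner_self of_real_mult[symmetric] of_real_eq_iff)
  hence "(norm (complex_of_real c *s z))^2 = (\<bar>c\<bar> * norm z)^2" by (simp add: power_mult_distrib)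
  thus ?thesis by (simp add: power2_eq_iff_nonneg)
qed

lemma qform_scale: fixes A :: "complex^'d^'d" shows "qform A (c *s z) = cnj c * c * qform A z"
  by (simp add: qform_cinner mv_scale cinner_scale_left cinner_scale_right)

lemma orth_independent:
  fixes S :: "(complex^'d) set"
  assumes n: "\<forall>u\<in>S. cinner u u = 1" and o: "\<forall>u\<in>S. \<forall>v\<in>S. u \<noteq> v \<longrightarrow> cinner u v = 0"
  shows "independent S"
proof
  assume "dependent S"
  then obtain a where a: "a \<in> S" "a \<in> span (S - {a})" unfolding dependent_def by blast
  have "span (S - {a}) \<subseteq> {y. cinner a y = 0}"
  proof (rule span_minimal)
    show "S - {a} \<subseteq> {y. cinner a y = 0}" using o a(1) by auto
    show "subspace {y. cinner a y = 0}"
      by (simp add: subspace_def cinner_add_right cinner_scaleR_right)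
  qed
  with a have "cinner a a = 0" by auto
  with n a show False by auto
qed

definition oeset :: "complex^'d^'d \<Rightarrow> (complex^'d) set \<Rightarrow> bool" where
  "oeset A S \<longleftrightarrow> finite S \<and> (\<forall>u\<in>S. cinner u u = 1) \<and> (\<forall>u\<in>S. \<forall>v\<in>S. u \<noteq> v \<longrightarrow> cinner u v = 0)
     \<and> (\<forall>u\<in>S. \<exists>\<mu>::real. A *v u = of_real \<mu> *s u)"

lemma oeset_card: fixes S :: "(complex^'d) set" shows "oeset A S \<Longrightarrow> card S < Suc DIM(complex^'d)"
  using independent_bound[OF orth_independent[of S]] unfolding oeset_def by auto

lemma cont_cinner: "continuous_on UNIV (\<lambda>x. cinner u x)"
  unfolding cinner_def by (intro continuous_intros)

lemma cont_qform: "continuous_on UNIV (\<lambda>x. Re (qform A x))"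
proof -
  have eq: "(\<lambda>x. Re (qform A x)) = (\<lambda>x. Re (\<Sum>i\<in>UNIV. cnj (x$i) * (\<Sum>j\<in>UNIV. A$i$j * x$j)))"
    by (simp add: qform_def matrix_vector_mult_def)
  show ?thesis unfolding eq by (intro continuous_intros)
qed

lemma eigen_in_orth:
  fixes A :: "complex^'d^'d"
  assumes h: "hermitian_mat A" and fin: "finite S"
    and ev: "\<forall>u\<in>S. \<exists>\<mu>::real. A *v u = of_real \<mu> *s u"
    and w: "w \<noteq> 0" "\<forall>u\<in>S. cinner u w = 0"
  shows "\<exists>x. cinner x x = 1 \<and> (\<forall>u\<in>S. cinner u x = 0) \<and> (\<exists>\<mu>::real. A *v x = of_real \<mu> *s x)"
proof -
  define W where "W = {x. \<forall>u\<in>S. cinner u x = 0}"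
  have Wdiff: "x \<in> W \<Longrightarrow> y \<in> W \<Longrightarrow> x - y \<in> W" for x y
    by (simp add: W_def cinner_diff_right)
  have Wadd: "x \<in> W \<Longrightarrow> y \<in> W \<Longrightarrow> x + y \<in> W" for x y
    by (simp add: W_def cinner_add_right)
  have Wscale: "x \<in> W \<Longrightarrow> c *s x \<in> W" for x c
    by (simp add: W_def cinner_scale_right)
  have Winv: "x \<in> W \<Longrightarrow> A *v x \<in> W" for x
  proof -
    assume x: "x \<in> W"
    { fix u assume u: "u \<in> S"
      then obtain \<mu> :: real where mu: "A *v u = of_real \<mu> *s u" using ev by blast
      have "cinner u (A *v x) = cinner (A *v u) x" by (rule herm_cinner[OF h])
      also have "\<dots> = 0" using x u by (simp add: mu cinner_scale_left W_def)
      finally have "cinner u (A *v x) = 0" . }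
    thus ?thesis by (simp add: W_def)
  qed
  have clW: "closed W"
  proof -
    have "W = (\<Inter>u\<in>S. {x. cinner u x = 0})" by (auto simp: W_def)
    moreover have "closed {x. cinner u x = 0}" for u
      by (rule closed_Collect_eq[OF cont_cinner continuous_on_const])
    ultimately show ?thesis by auto
  qed
  define K where "K = W \<inter> sphere 0 1"
  have cK: "compact K" unfolding K_def using clW compact_sphere by blast
  have wW: "w \<in> W" using w by (simp add: W_def)
  have "(complex_of_real (1 / norm w)) *s w \<in> K"
    unfolding K_def using Wscale[OF wW] w norm_scale[of "1 / norm w" w]
    by simp
  hence neK: "K \<noteq> {}" by blast
  obtain x where xK: "x \<in> K" and xmax: "\<forall>y\<in>K. Re (qform A y) \<le> Re (qform A x)"
    using continuous_attains_sup[OF cK neK continuous_on_subset[OF cont_qform subset_UNIV]] by blast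
  define lam where "lam = Re (qform A x)"
  have xW: "x \<in> W" and nx: "norm x = 1" using xK by (auto simp: K_def)
  have xx: "cinner x x = 1" by (simp add: cinner_self nx)
  have key: "Re (qform A z) \<le> lam * Re (cinner z z)" if zW: "z \<in> W" for z
  proof (cases "z = 0")
    case True thus ?thesis by (simp add: qform_def)
  next
    case False
    define c where "c = 1 / norm z"
    have cpos: "c > 0" using False by (simp add: c_def)
    have "norm (complex_of_real c *s z) = 1"
      using norm_scale[of c z] False cpos by (simp add: c_def)
    hence "complex_of_real c *s z \<in> K" using Wscale[OF zW] by (simp add: K_def)
    hence "Re (qform A (complex_of_real c *s z)) \<le> lam" using xmax lam_def by blast
    hence "c^2 * Re (qform A z) \<le> lam" by (simp add: qform_scale power2_eq_square)
    hence "c^2 * Re (qform A z) * (norm z)^2 \<le> lam * (norm z)^2" by (simp add: mult_right_mono)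
    moreover have "c^2 * (norm z)^2 = 1" using False by (simp add: c_def field_simps)
    ultimately have "Re (qform A z) \<le> lam * (norm z)^2" by (simp add: algebra_simps)
    thus ?thesis by (simp add: cinner_self)
  qed
  define v where "v = A *v x - of_real lam *s x"
  have vW: "v \<in> W" unfolding v_def by (intro Wdiff Winv Wscale xW)
  have qx: "qform A x = of_real lam" using herm_qform_real[OF h] by (simp add: lam_def)
  have Ax: "A *v x = v + of_real lam *s x" by (simp add: v_def)
  have xv: "cinner x v = 0" unfolding v_def
    by (simp add: cinner_diff_right cinner_scale_right xx qx[unfolded qform_cinner])
  have vx: "cinner v x = 0" using cinner_cnj[of x v] xv by simp
  have e1: "cinner x (A *v v) = cinner v v"
    using herm_cinner[OF h, of x v] by (simp add: Ax cinner_add_left cinner_scale_left xv)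
  have e3: "cinner v (A *v x) = cinner v v"
    by (simp add: Ax cinner_add_right cinner_scale_right vx)
  define a where "a = (norm v)^2"
  define q where "q = Re (qform A v)"
  have ineq: "lam + 2 * s * a + s^2 * q \<le> lam * (1 + s^2 * a)" for s :: real
  proof -
    define z where "z = x + complex_of_real s *s v"
    have zW: "z \<in> W" unfolding z_def by (intro Wadd Wscale xW vW)
    have "qform A z = of_real lam + of_real s * cinner v v + of_real s * cinner v v
                      + of_real s * of_real s * qform A v"
      unfolding z_def qform_cinner
      by (simp add: matrix_vector_right_distrib mv_scale cinner_add_left cinner_add_right
          cinner_scale_left cinner_scale_right e1 e3 qx[unfolded qform_cinner] algebra_simps)
    hence "Re (qform A z) = lam + 2 * s * a + s^2 * q"
      by (simp add: cinner_self a_def q_def power2_eq_square)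
    moreover have "cinner z z = 1 + of_real s * of_real s * cinner v v"
      unfolding z_def
      by (simp add: cinner_add_left cinner_add_right cinner_scale_left cinner_scale_right xx xv vx)
    hence "Re (cinner z z) = 1 + s^2 * a" by (simp add: cinner_self a_def power2_eq_square)
    ultimately show ?thesis using key[OF zW] by simp
  qed
  have "a = 0"
  proof (rule ccontr)
    assume "a \<noteq> 0"
    hence apos: "a > 0" by (simp add: a_def)
    define c where "c = q - lam * a"
    define s where "s = a / (\<bar>c\<bar> + 1)"
    have spos: "s > 0" using apos by (simp add: s_def)
    have "s * \<bar>c\<bar> < a" using apos by (simp add: s_def field_simps)
    hence "s * (s * \<bar>c\<bar>) < s * a" using spos by simp
    hence f1: "s^2 * \<bar>c\<bar> < s * a" by (simp add: power2_eq_square mult.assoc)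
    have "s^2 * (- \<bar>c\<bar>) \<le> s^2 * c" by (rule mult_left_mono) simp_all
    hence f2: "- (s^2 * \<bar>c\<bar>) \<le> s^2 * c" by simp
    have f3: "2 * s * a + s^2 * c \<le> 0" using ineq[of s] by (simp add: c_def algebra_simps)
    have f4: "s * a > 0" using spos apos by simp
    show False using f1 f2 f3 f4 by linarith
  qed
  hence "v = 0" by (simp add: a_def)
  hence "A *v x = of_real lam *s x" by (simp add: Ax)
  thus ?thesis using xx xW by (auto simp: W_def)
qed



lemma mv_sum: fixes A :: "complex^'d^'d" shows "A *v (\<Sum>u\<in>S. f u) = (\<Sum>u\<in>S. A *v f u)"
  by (induct S rule: infinite_finite_induct) (auto simp: matrix_vector_right_distrib)

lemma sum_delta_orth:
  assumes fin: "finite S" and u: "u \<in> S" and n: "cinner u u = 1"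
    and o: "\<forall>u\<in>S. \<forall>v\<in>S. u \<noteq> v \<longrightarrow> cinner u v = 0"
  shows "(\<Sum>v\<in>S. c v * cinner u v) = c u"
proof -
  have "(\<Sum>v\<in>S. c v * cinner u v) = c u * cinner u u + (\<Sum>v\<in>S - {u}. c v * cinner u v)"
    using fin u by (simp add: sum.remove)
  also have "(\<Sum>v\<in>S - {u}. c v * cinner u v) = 0" using o u by (intro sum.neutral) auto
  finally show ?thesis using n by simp
qed

lemma spectral:
  fixes A :: "complex^'d^'d"
  assumes h: "hermitian_mat A"
  shows "\<exists>S lam. finite S \<and> (\<forall>u\<in>S. cinner u u = 1) \<and> (\<forall>u\<in>S. \<forall>v\<in>S. u \<noteq> v \<longrightarrow> cinner u v = 0)
     \<and> (\<forall>u\<in>S. A *v u = of_real (lam u) *s u) \<and> (\<forall>x. x = (\<Sum>u\<in>S. cinner u x *s u))"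
proof -
  have e0: "oeset A {}" by (simp add: oeset_def)
  obtain S where S: "oeset A S" and Smax: "\<forall>T. oeset A T \<longrightarrow> card T \<le> card S"
    using ex_has_greatest_nat[of "oeset A" "{}" card "Suc DIM(complex^'d)", OF e0] oeset_card by blast
  have fin: "finite S" and n: "\<forall>u\<in>S. cinner u u = 1" and o: "\<forall>u\<in>S. \<forall>v\<in>S. u \<noteq> v \<longrightarrow> cinner u v = 0"
    and ev: "\<forall>u\<in>S. \<exists>\<mu>::real. A *v u = of_real \<mu> *s u" using S by (auto simp: oeset_def)
  have exp: "x = (\<Sum>u\<in>S. cinner u x *s u)" for x
  proof (rule ccontr)
    assume ne: "x \<noteq> (\<Sum>u\<in>S. cinner u x *s u)"
    define r where "r = x - (\<Sum>u\<in>S. cinner u x *s u)"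
    have r0: "r \<noteq> 0" using ne by (simp add: r_def)
    have rS: "\<forall>u\<in>S. cinner u r = 0"
    proof
      fix u assume u: "u \<in> S"
      have "cinner u (\<Sum>v\<in>S. cinner v x *s v) = (\<Sum>v\<in>S. cinner v x * cinner u v)"
        by (simp add: cinner_sum_right cinner_scale_right)
      also have "\<dots> = cinner u x" using sum_delta_orth[OF fin u _ o] n u by simp
      finally show "cinner u r = 0" by (simp add: r_def cinner_diff_right)
    qed
    obtain y where y: "cinner y y = 1" "\<forall>u\<in>S. cinner u y = 0" "\<exists>\<mu>::real. A *v y = of_real \<mu> *s y"
      using eigen_in_orth[OF h fin ev r0 rS] by blast
    have yS: "y \<notin> S" using y(1,2) by auto
    have yu: "\<forall>u\<in>S. cinner y u = 0"
    proof
      fix u assume "u \<in> S"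
      hence "cnj (cinner u y) = 0" using y(2) by simp
      thus "cinner y u = 0" by (simp add: cinner_cnj)
    qed
    have "oeset A (insert y S)"
      unfolding oeset_def using fin n o ev y yu by auto
    hence "card (insert y S) \<le> card S" using Smax by blast
    thus False using fin yS by simp
  qed
  define lam where "lam u = (SOME \<mu>::real. A *v u = of_real \<mu> *s u)" for u
  have "\<forall>u\<in>S. A *v u = of_real (lam u) *s u"
    using ev unfolding lam_def by (metis (mono_tags, lifting) someI_ex)
  thus ?thesis using fin n o exp by blast
qed

definition fmat :: "(complex^'d) set \<Rightarrow> (complex^'d \<Rightarrow> complex) \<Rightarrow> complex^'d^'d" where
  "fmat S g = (\<Sum>u\<in>S. (\<chi> i j. g u * u$i * cnj (u$j)))"

lemma fmat_mv: fixes S :: "(complex^'d) set" shows "fmat S g *v x = (\<Sum>u\<in>S. (g u * cinner u x) *s u)"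
proof -
  have "(\<chi> i j. g u * u$i * cnj (u$j)) *v x = (g u * cinner u x) *s u" for u
    by (simp add: vec_eq_iff matrix_vector_mult_def cinner_def sum_distrib_left ac_simps)
  moreover have "(\<Sum>u\<in>S. M u) *v x = (\<Sum>u\<in>S. M u *v x)" for M :: "_ \<Rightarrow> complex^'d^'d"
    by (induct S rule: infinite_finite_induct) (auto simp: matrix_vector_mult_add_rdistrib)
  ultimately show ?thesis unfolding fmat_def by simp
qed



lemma psd_herm: "pos_semidef_mat A \<Longrightarrow> hermitian_mat A" by (simp add: pos_semidef_mat_def)
lemma pd_herm: "pos_def_mat A \<Longrightarrow> hermitian_mat A" by (simp add: pos_def_mat_def)

lemma cinner_fmat:
  fixes S :: "(complex^'d) set"
  assumes fin: "finite S" and n: "\<forall>u\<in>S. cinner u u = 1"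
    and o: "\<forall>u\<in>S. \<forall>v\<in>S. u \<noteq> v \<longrightarrow> cinner u v = 0" and v: "v \<in> S"
  shows "cinner v (fmat S g *v x) = g v * cinner v x"
proof -
  have "cinner v (fmat S g *v x) = (\<Sum>u\<in>S. (g u * cinner u x) * cinner v u)"
    by (simp add: fmat_mv cinner_sum_right cinner_scale_right)
  also have "\<dots> = g v * cinner v x" using sum_delta_orth[OF fin v _ o] n v by simp
  finally show ?thesis .
qed

lemma sqrt_exists:
  fixes A :: "complex^'d^'d"
  assumes p: "pos_semidef_mat A"
  shows "\<exists>B. pos_semidef_mat B \<and> B ** B = A"
proof -
  obtain S lam where fin: "finite S" and n: "\<forall>u\<in>S. cinner u u = 1"
    and o: "\<forall>u\<in>S. \<forall>v\<in>S. u \<noteq> v \<longrightarrow> cinner u v = 0"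
    and ev: "\<forall>u\<in>S. A *v u = of_real (lam u) *s u" and exp: "\<forall>x. x = (\<Sum>u\<in>S. cinner u x *s u)"
    using spectral[OF psd_herm[OF p]] by blast
  have lam0: "lam u \<ge> 0" if u: "u \<in> S" for u
  proof -
    have "qform A u = of_real (lam u)" using u ev n by (simp add: qform_cinner cinner_scale_right)
    moreover have "Re (qform A u) \<ge> 0" using p by (simp add: pos_semidef_mat_def)
    ultimately show ?thesis by simp
  qed
  define g where "g u = complex_of_real (sqrt (lam u))" for u
  define B where "B = fmat S g"
  have cB: "cinner v (B *v x) = g v * cinner v x" if "v \<in> S" for v x
    unfolding B_def by (rule cinner_fmat[OF fin n o that])
  have hB: "hermitian_mat B"
    unfolding herm_iff
  proof (intro allI)
    fix x y
    have "cinner x (B *v y) = (\<Sum>u\<in>S. (g u * cinner u y) * cinner x u)"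
      by (simp add: B_def fmat_mv cinner_sum_right cinner_scale_right)
    also have "\<dots> = (\<Sum>u\<in>S. cnj (g u * cinner u x) * cinner u y)"
    proof (intro sum.cong refl)
      fix u
      have "cinner x u = cnj (cinner u x)" by (simp add: cinner_cnj)
      thus "g u * cinner u y * cinner x u = cnj (g u * cinner u x) * cinner u y"
        by (simp add: g_def)
    qed
    also have "\<dots> = cinner (B *v x) y"
      by (simp add: B_def fmat_mv cinner_sum_left cinner_scale_left)
    finally show "cinner x (B *v y) = cinner (B *v x) y" .
  qed
  have pB: "pos_semidef_mat B"
    unfolding pos_semidef_mat_def
  proof (intro conjI hB allI)
    fix x
    have "qform B x = (\<Sum>u\<in>S. (g u * cinner u x) * cnj (cinner u x))"
      by (simp add: qform_cinner B_def fmat_mv cinner_sum_right cinner_scale_right cinner_cnj)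
    hence "Re (qform B x) = (\<Sum>u\<in>S. sqrt (lam u) * (cmod (cinner u x))^2)"
      by (simp add: g_def mult.assoc complex_mult_cnj cmod_power2)
    also have "\<dots> \<ge> 0" using lam0 by (intro sum_nonneg) simp
    finally show "Re (qform B x) \<ge> 0" .
  qed
  have "B ** B = A"
  proof (subst matrix_eq, intro allI)
    fix x
    have "(B ** B) *v x = B *v (B *v x)" by (simp add: matrix_vector_mul_assoc)
    also have "\<dots> = (\<Sum>v\<in>S. (g v * cinner v (B *v x)) *s v)" by (simp add: B_def fmat_mv)
    also have "\<dots> = (\<Sum>v\<in>S. (cinner v x * of_real (lam v)) *s v)"
    proof (intro sum.cong refl)
      fix v assume v: "v \<in> S"
      have "g v * g v = of_real (lam v)" using lam0[OF v]
        by (simp add: g_def of_real_mult[symmetric] del: of_real_mult)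
      thus "(g v * cinner v (B *v x)) *s v = (cinner v x * of_real (lam v)) *s v"
        using cB[OF v] by (simp add: ac_simps)
    qed
    also have "\<dots> = A *v (\<Sum>u\<in>S. cinner u x *s u)"
      by (simp add: mv_sum mv_scale ev vector_smult_assoc)
    also have "\<dots> = A *v x" by (simp only: exp[rule_format, of x, symmetric])
    finally show "(B ** B) *v x = A *v x" .
  qed
  with pB show ?thesis by blast
qed

lemma psd_zero:
  assumes p: "pos_semidef_mat B" and z: "Re (qform B u) = 0"
  shows "B *v u = 0"
proof -
  obtain R where pR: "pos_semidef_mat R" and RR: "R ** R = B" using sqrt_exists[OF p] by blast
  have "qform B u = cinner (R *v u) (R *v u)"
    by (simp add: qform_cinner RR[symmetric] matrix_vector_mul_assoc[symmetric] herm_cinner[OF psd_herm[OF pR]])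
  hence "(norm (R *v u))^2 = 0" using z by (simp add: cinner_self)
  hence "R *v u = 0" by simp
  thus ?thesis by (simp add: RR[symmetric] matrix_vector_mul_assoc[symmetric])
qed

lemma sqrt_unique:
  fixes B C :: "complex^'d^'d"
  assumes pB: "pos_semidef_mat B" and pC: "pos_semidef_mat C" and eq: "B ** B = C ** C"
  shows "B = C"
proof -
  define D where "D = B - C"
  have hB: "hermitian_mat B" and hC: "hermitian_mat C" using pB pC by (auto simp: psd_herm)
  have hD: "hermitian_mat D"
    unfolding herm_iff D_def
    by (simp add: matrix_vector_mult_diff_rdistrib cinner_diff_left cinner_diff_right herm_cinner[OF hB] herm_cinner[OF hC])
  obtain S lam where fin: "finite S" and n: "\<forall>u\<in>S. cinner u u = 1"
    and ev: "\<forall>u\<in>S. D *v u = of_real (lam u) *s u" and exp: "\<forall>x. x = (\<Sum>u\<in>S. cinner u x *s u)"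
    using spectral[OF hD] by blast
  have lz: "lam u = 0" if u: "u \<in> S" for u
  proof (rule ccontr)
    assume nz: "lam u \<noteq> 0"
    have Du: "D *v u = of_real (lam u) *s u" using ev u by blast
    have bb: "B *v (B *v u) = C *v (C *v u)" by (simp add: matrix_vector_mul_assoc eq)
    have Dv: "D *v y = B *v y - C *v y" for y by (simp add: D_def matrix_vector_mult_diff_rdistrib)
    have "0 = cinner u (B *v (B *v u)) - cinner u (C *v (C *v u))" by (simp add: bb)
    also have "\<dots> = cinner u (B *v (D *v u)) + cinner u (D *v (C *v u))"
      by (simp add: Dv matrix_vector_right_distrib matrix_vector_mult_diff_distrib cinner_diff_right)
    also have "cinner u (D *v (C *v u)) = cinner (D *v u) (C *v u)" by (rule herm_cinner[OF hD])
    also have "\<dots> = of_real (lam u) * qform C u" by (simp add: Du cinner_scale_left qform_cinner)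
    also have "cinner u (B *v (D *v u)) = of_real (lam u) * qform B u"
      by (simp add: Du mv_scale cinner_scale_right qform_cinner)
    finally have "of_real (lam u) * (qform B u + qform C u) = 0" by (simp add: algebra_simps)
    hence "qform B u + qform C u = 0" using nz by simp
    hence "Re (qform B u + qform C u) = 0" by simp
    hence "Re (qform B u) + Re (qform C u) = 0" by simp
    moreover have "Re (qform B u) \<ge> 0" "Re (qform C u) \<ge> 0" using pB pC by (auto simp: pos_semidef_mat_def)
    ultimately have "Re (qform B u) = 0" "Re (qform C u) = 0" by linarith+
    hence "B *v u = 0" "C *v u = 0" using psd_zero pB pC by blast+
    hence "D *v u = 0" by (simp add: D_def matrix_vector_mult_diff_rdistrib)
    hence "of_real (lam u) *s u = 0" using Du by simp
    hence "cinner u (of_real (lam u) *s u) = 0" by (metis cinner_zero_right)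
    hence "of_real (lam u) = (0::complex)" using n u by (simp add: cinner_scale_right)
    thus False using nz by simp
  qed
  have "D = 0"
  proof (subst matrix_eq, intro allI)
    fix x
    have "D *v x = D *v (\<Sum>u\<in>S. cinner u x *s u)" by (simp only: exp[rule_format, of x, symmetric])
    also have "\<dots> = 0" by (simp add: mv_sum mv_scale ev lz)
    finally show "D *v x = 0 *v x" by simp
  qed
  thus ?thesis by (simp add: D_def)
qed

lemma mat_sqrt_props:
  assumes p: "pos_semidef_mat A"
  shows "pos_semidef_mat (mat_sqrt A) \<and> mat_sqrt A ** mat_sqrt A = A"
proof -
  have "\<exists>!B. pos_semidef_mat B \<and> B ** B = A"
    using sqrt_exists[OF p] sqrt_unique by blast
  thus ?thesis unfolding mat_sqrt_def by (rule theI')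
qed

lemma mat_sqrt_eq:
  assumes p: "pos_semidef_mat B" and e: "B ** B = A"
  shows "mat_sqrt A = B"
  unfolding mat_sqrt_def
proof (rule the_equality)
  show "pos_semidef_mat B \<and> B ** B = A" using p e by blast
  fix C assume "pos_semidef_mat C \<and> C ** C = A"
  thus "C = B" using sqrt_unique[of C B] p e by auto
qed



type_synonym 'd cm = "complex^'d^'d"

lemma inv_props:
  fixes A :: "('d::finite) cm"
  assumes "invertible A" shows "A ** matrix_inv A = mat 1" "matrix_inv A ** A = mat 1"
  using someI_ex[OF assms[unfolded invertible_def]] unfolding matrix_inv_def by auto

lemma inv_unique:
  fixes A B :: "('d::finite) cm"
  assumes "A ** B = mat 1" shows "matrix_inv A = B" "invertible A"
proof -
  have BA: "B ** A = mat 1" using assms matrix_left_right_inverse by blast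
  show iA: "invertible A" using assms BA unfolding invertible_def by blast
  have "matrix_inv A = matrix_inv A ** (A ** B)" by (simp add: assms)
  also have "\<dots> = B" by (simp add: matrix_mul_assoc inv_props(2)[OF iA])
  finally show "matrix_inv A = B" .
qed

lemma inv_invertible: fixes A :: "('d::finite) cm" shows "invertible A \<Longrightarrow> invertible (matrix_inv A)"
  using inv_props inv_unique by blast

lemma inv_inv: fixes A :: "('d::finite) cm" shows "invertible A \<Longrightarrow> matrix_inv (matrix_inv A) = A"
  using inv_props(2) inv_unique(1) by blast

lemma pd_psd: assumes p: "pos_def_mat A" shows "pos_semidef_mat A"
  unfolding pos_semidef_mat_def
proof (intro conjI allI)
  show "hermitian_mat A" using p by (simp add: pos_def_mat_def)
  fix x show "Re (qform A x) \<ge> 0"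
  proof (cases "x = 0")
    case True thus ?thesis by (simp add: qform_cinner)
  next
    case False thus ?thesis using p by (simp add: pos_def_mat_def less_imp_le)
  qed
qed

lemma pd_invertible:
  fixes A :: "('d::finite) cm" assumes p: "pos_def_mat A" shows "invertible A"
proof -
  have "\<forall>x. A *v x = 0 \<longrightarrow> x = 0"
  proof (intro allI impI)
    fix x assume "A *v x = 0"
    hence "Re (qform A x) = 0" by (simp add: qform_cinner)
    thus "x = 0" using p by (auto simp: pos_def_mat_def)
  qed
  thus ?thesis using matrix_left_invertible_ker invertible_left_inverse by blast
qed

lemma psd_invertible_pd:
  fixes A :: "('d::finite) cm" assumes p: "pos_semidef_mat A" and i: "invertible A" shows "pos_def_mat A"
  unfolding pos_def_mat_def
proof (intro conjI allI impI)
  show "hermitian_mat A" using p by (simp add: psd_herm)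
  fix x :: "complex^'d" assume x: "x \<noteq> 0"
  have "Re (qform A x) \<noteq> 0"
  proof
    assume "Re (qform A x) = 0"
    hence "A *v x = 0" by (rule psd_zero[OF p])
    hence "matrix_inv A *v (A *v x) = 0" by simp
    hence "x = 0" by (simp add: matrix_vector_mul_assoc inv_props(2)[OF i])
    thus False using x by simp
  qed
  moreover have "Re (qform A x) \<ge> 0" using p by (simp add: pos_semidef_mat_def)
  ultimately show "Re (qform A x) > 0" by linarith
qed

lemma adjoint_inv:
  fixes A :: "('d::finite) cm" assumes h: "hermitian_mat A" and i: "invertible A"
  shows "hermitian_mat (matrix_inv A)"
proof -
  have "adjoint_mat (matrix_inv A) ** A = mat 1"
    using adjoint_mult[of A "matrix_inv A"] h inv_props(1)[OF i] by (simp add: hermitian_mat_def)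
  hence "A ** adjoint_mat (matrix_inv A) = mat 1" using matrix_left_right_inverse by blast
  hence "matrix_inv A = adjoint_mat (matrix_inv A)" by (rule inv_unique(1))
  hence "adjoint_mat (matrix_inv A) = matrix_inv A" by simp
  thus ?thesis by (simp add: hermitian_mat_def)
qed

lemma congr_psd:
  fixes A X :: "('d::finite) cm" assumes p: "pos_semidef_mat A" and hX: "hermitian_mat X"
  shows "pos_semidef_mat (X ** A ** X)"
  unfolding pos_semidef_mat_def
proof (intro conjI allI)
  show "hermitian_mat (X ** A ** X)" using hX psd_herm[OF p]
    by (simp add: hermitian_mat_def adjoint_mult matrix_mul_assoc)
  fix y
  have "qform (X ** A ** X) y = qform A (X *v y)"
    by (simp add: qform_cinner matrix_vector_mul_assoc[symmetric] herm_cinner[OF hX])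
  thus "Re (qform (X ** A ** X) y) \<ge> 0" using p by (simp add: pos_semidef_mat_def)
qed

lemma congr_pd:
  fixes A X :: "('d::finite) cm" assumes p: "pos_def_mat A" and hX: "hermitian_mat X" and iX: "invertible X"
  shows "pos_def_mat (X ** A ** X)"
proof (rule psd_invertible_pd)
  show "pos_semidef_mat (X ** A ** X)" by (rule congr_psd[OF pd_psd[OF p] hX])
  show "invertible (X ** A ** X)" by (intro invertible_mult pd_invertible[OF p] iX)
qed

lemma inv_pd: fixes A :: "('d::finite) cm" assumes p: "pos_def_mat A" shows "pos_def_mat (matrix_inv A)"
proof -
  have i: "invertible A" by (rule pd_invertible[OF p])
  have "matrix_inv A ** A ** matrix_inv A = matrix_inv A"
    by (simp add: inv_props(2)[OF i])
  moreover have "pos_def_mat (matrix_inv A ** A ** matrix_inv A)"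
    by (intro congr_pd p adjoint_inv pd_herm inv_invertible i)
  ultimately show ?thesis by simp
qed

lemma sqrt_pd: fixes A :: "('d::finite) cm" assumes p: "pos_def_mat A"
  shows "pos_def_mat (mat_sqrt A)" "mat_sqrt A ** mat_sqrt A = A"
proof -
  have s: "pos_semidef_mat (mat_sqrt A)" "mat_sqrt A ** mat_sqrt A = A"
    using mat_sqrt_props[OF pd_psd[OF p]] by auto
  show "mat_sqrt A ** mat_sqrt A = A" by (rule s(2))
  have "mat_sqrt A ** (mat_sqrt A ** matrix_inv A) = mat 1"
    by (simp add: matrix_mul_assoc s(2) inv_props(1)[OF pd_invertible[OF p]])
  hence "invertible (mat_sqrt A)" using inv_unique(2) by blast
  thus "pos_def_mat (mat_sqrt A)" by (rule psd_invertible_pd[OF s(1)])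
qed

lemma sqrt_congr:
  fixes S G Y :: "('d::finite) cm"
  assumes hS: "hermitian_mat S" and pG: "pos_semidef_mat G" and e: "G ** (S ** S) ** G = Y"
  shows "mat_sqrt (S ** Y ** S) = S ** G ** S"
proof (rule mat_sqrt_eq)
  show "pos_semidef_mat (S ** G ** S)" by (rule congr_psd[OF pG hS])
  show "S ** G ** S ** (S ** G ** S) = S ** Y ** S"
    by (simp add: e[symmetric] matrix_mul_assoc)
qed

lemma mat_rdistrib: fixes A B C :: "('d::finite) cm" shows "(A + B) ** C = A ** C + B ** C"
  by (simp add: matrix_matrix_mult_def vec_eq_iff distrib_right sum.distrib)

lemma scaleR_mult_left: fixes A B :: "('d::finite) cm" shows "(r *\<^sub>R A) ** B = r *\<^sub>R (A ** B)"
  by (simp add: scalar_matrix_assoc)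
lemma scaleR_mult_right: fixes A B :: "('d::finite) cm" shows "A ** (r *\<^sub>R B) = r *\<^sub>R (A ** B)"
  by (simp add: matrix_scalar_ac scalar_matrix_assoc)

lemma qform_add: "qform (A + B) x = qform A x + qform B x"
  by (simp add: qform_cinner matrix_vector_mult_add_rdistrib cinner_add_right)
lemma qform_scaleR: fixes A :: "('d::finite) cm" shows "qform (r *\<^sub>R A) x = of_real r * qform A x"
proof -
  have "(r *\<^sub>R A) *v x = r *\<^sub>R (A *v x)"
    by (simp add: vec_eq_iff matrix_vector_mult_def scaleR_sum_right)
  thus ?thesis by (simp add: qform_cinner cinner_scaleR_right)
qed
lemma qform_id: "qform (mat 1) x = of_real ((norm x)^2)"
  by (simp add: qform_cinner cinner_self)

lemma convex_pd:
  fixes T :: "('d::finite) cm" assumes p: "pos_def_mat T" and t: "0 \<le> t" "t \<le> 1"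
  shows "pos_def_mat ((1 - t) *\<^sub>R mat 1 + t *\<^sub>R T)"
  unfolding pos_def_mat_def
proof (intro conjI allI impI)
  show "hermitian_mat ((1 - t) *\<^sub>R mat 1 + t *\<^sub>R T)" using pd_herm[OF p]
    by (simp add: hermitian_mat_def adjoint_add adjoint_scaleR)
  fix x :: "complex^'d" assume x: "x \<noteq> 0"
  have T: "Re (qform T x) > 0" using p x by (simp add: pos_def_mat_def)
  have "Re (qform ((1 - t) *\<^sub>R mat 1 + t *\<^sub>R T) x) = (1 - t) * (norm x)^2 + t * Re (qform T x)"
    by (simp add: qform_add qform_scaleR qform_id)
  also have "\<dots> > 0"
  proof (cases "t = 1")
    case True thus ?thesis using T by simp
  next
    case False
    hence "(1 - t) * (norm x)^2 > 0" using t x by simp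
    moreover have "t * Re (qform T x) \<ge> 0" using t T by simp
    ultimately show ?thesis by linarith
  qed
  finally show "Re (qform ((1 - t) *\<^sub>R mat 1 + t *\<^sub>R T) x) > 0" .
qed

lemma geo_mean_props:
  fixes A B :: "('d::finite) cm" assumes pA: "pos_def_mat A" and pB: "pos_def_mat B"
  shows "pos_def_mat (geo_mean A B)" "geo_mean A B ** matrix_inv A ** geo_mean A B = B"
proof -
  define Ah where "Ah = mat_sqrt A"
  define Aih where "Aih = matrix_inv Ah"
  have pAh: "pos_def_mat Ah" and AhAh: "Ah ** Ah = A" using sqrt_pd[OF pA] by (auto simp: Ah_def)
  have iAh: "invertible Ah" by (rule pd_invertible[OF pAh])
  have pAih: "pos_def_mat Aih" unfolding Aih_def by (rule inv_pd[OF pAh])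
  define C where "C = Aih ** B ** Aih"
  have pC: "pos_def_mat C" unfolding C_def by (intro congr_pd pB pd_herm pAih pd_invertible)
  define K where "K = mat_sqrt C"
  have pK: "pos_def_mat K" and KK: "K ** K = C" using sqrt_pd[OF pC] by (auto simp: K_def)
  have G: "geo_mean A B = Ah ** K ** Ah" by (simp add: geo_mean_def Let_def Ah_def Aih_def C_def K_def)
  show "pos_def_mat (geo_mean A B)" unfolding G by (intro congr_pd pK pd_herm pAh iAh)
  have AhAih: "Ah ** Aih = mat 1" "Aih ** Ah = mat 1" using inv_props[OF iAh] by (auto simp: Aih_def)
  have iA: "matrix_inv A = Aih ** Aih"
  proof -
    have "A ** (Aih ** Aih) = Ah ** (Ah ** Aih) ** Aih"
      by (simp add: AhAh[symmetric] matrix_mul_assoc)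
    also have "\<dots> = mat 1" by (simp add: AhAih)
    finally show ?thesis by (rule inv_unique(1))
  qed
  have "Ah ** K ** Ah ** (Aih ** Aih) ** (Ah ** K ** Ah) = Ah ** K ** (Ah ** Aih) ** (Aih ** Ah) ** K ** Ah"
    by (simp add: matrix_mul_assoc)
  also have "\<dots> = Ah ** (K ** K) ** Ah" by (simp add: AhAih matrix_mul_assoc)
  also have "\<dots> = (Ah ** Aih) ** B ** (Aih ** Ah)" by (simp add: KK C_def matrix_mul_assoc)
  also have "\<dots> = B" by (simp add: AhAih)
  finally show "geo_mean A B ** matrix_inv A ** geo_mean A B = B" by (simp add: G iA)
qed



theorem mainTheorem5:
  fixes P Q :: "complex^'d^'d" and t :: real
  assumes "pos_def_mat P" and "pos_def_mat Q" and "0 \<le> t" and "t \<le> 1"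
  shows "gen_fidelity (matrix_inv (bw_geodesic (matrix_inv P) (matrix_inv Q) t)) P Q
           = uhlmann_fidelity P Q"
proof -
  note pP = assms(1) and pQ = assms(2)
  have iP: "invertible P" by (rule pd_invertible[OF pP])
  have iQ: "invertible Q" by (rule pd_invertible[OF pQ])
  define Pi where "Pi = matrix_inv P"
  define Qi where "Qi = matrix_inv Q"
  have pQi: "pos_def_mat Qi" unfolding Qi_def by (rule inv_pd[OF pQ])
  have invPi: "matrix_inv Pi = P" unfolding Pi_def by (rule inv_inv[OF iP])
  have invQi: "matrix_inv Qi = Q" unfolding Qi_def by (rule inv_inv[OF iQ])
  have PiP: "Pi ** P = mat 1" "P ** Pi = mat 1" using inv_props[OF iP] by (auto simp: Pi_def)
  define T where "T = geo_mean P Qi"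
  have pT: "pos_def_mat T" and TPT: "T ** Pi ** T = Qi"
    using geo_mean_props[OF pP pQi] by (auto simp: T_def Pi_def)
  have iT: "invertible T" by (rule pd_invertible[OF pT])
  define Ti where "Ti = matrix_inv T"
  have pTi: "pos_def_mat Ti" unfolding Ti_def by (rule inv_pd[OF pT])
  have TTi: "T ** Ti = mat 1" "Ti ** T = mat 1" using inv_props[OF iT] by (auto simp: Ti_def)
  have Qeq: "Q = Ti ** P ** Ti"
  proof -
    have "(T ** Pi ** T) ** (Ti ** P ** Ti) = T ** Pi ** (T ** Ti) ** P ** Ti"
      by (simp add: matrix_mul_assoc)
    also have "\<dots> = T ** (Pi ** P) ** Ti" by (simp add: TTi matrix_mul_assoc)
    also have "\<dots> = mat 1" by (simp add: PiP TTi)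
    finally have "Qi ** (Ti ** P ** Ti) = mat 1" by (simp add: TPT)
    hence "matrix_inv Qi = Ti ** P ** Ti" by (rule inv_unique(1))
    thus ?thesis by (simp add: invQi)
  qed
  define M where "M = (1 - t) *\<^sub>R mat 1 + t *\<^sub>R T"
  have pM: "pos_def_mat M" unfolding M_def by (rule convex_pd[OF pT assms(3,4)])
  have iM: "invertible M" by (rule pd_invertible[OF pM])
  define Mi where "Mi = matrix_inv M"
  have pMi: "pos_def_mat Mi" unfolding Mi_def by (rule inv_pd[OF pM])
  have MMi: "M ** Mi = mat 1" "Mi ** M = mat 1" using inv_props[OF iM] by (auto simp: Mi_def)
  define Y where "Y = (1 - t) *\<^sub>R Ti + t *\<^sub>R mat 1"
  have YM1: "M ** Ti = Y"
    by (simp add: M_def Y_def mat_rdistrib scaleR_mult_left TTi)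
  have YM2: "Ti ** M = Y"
    by (simp add: M_def Y_def matrix_add_ldistrib scaleR_mult_right TTi)
  have pY: "pos_def_mat Y"
  proof -
    have "pos_def_mat ((1 - (1 - t)) *\<^sub>R mat 1 + (1 - t) *\<^sub>R Ti)"
      by (rule convex_pd[OF pTi]) (use assms(3,4) in auto)
    thus ?thesis by (simp add: Y_def add.commute)
  qed
  have bw: "bw_geodesic (matrix_inv P) (matrix_inv Q) t = M ** Pi ** M"
    by (simp add: bw_geodesic_def Let_def Pi_def[symmetric] Qi_def[symmetric] invPi T_def[symmetric] M_def[symmetric])
  define R where "R = Mi ** P ** Mi"
  have Req: "matrix_inv (M ** Pi ** M) = R"
  proof (rule inv_unique(1))
    have "M ** Pi ** M ** (Mi ** P ** Mi) = M ** Pi ** (M ** Mi) ** P ** Mi"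
      by (simp add: matrix_mul_assoc)
    also have "\<dots> = M ** (Pi ** P) ** Mi" by (simp add: MMi matrix_mul_assoc)
    also have "\<dots> = mat 1" by (simp add: PiP MMi)
    finally show "M ** Pi ** M ** R = mat 1" by (simp add: R_def)
  qed
  have pR: "pos_def_mat R" unfolding R_def
    by (rule congr_pd[OF pP pd_herm[OF pMi] pd_invertible[OF pMi]])
  define S where "S = mat_sqrt R"
  have pS: "pos_def_mat S" and SS: "S ** S = R" using sqrt_pd[OF pR] by (auto simp: S_def)
  have hS: "hermitian_mat S" by (rule pd_herm[OF pS])
  have iS: "invertible S" by (rule pd_invertible[OF pS])
  define Si where "Si = matrix_inv S"
  have SSi: "S ** Si = mat 1" "Si ** S = mat 1" using inv_props[OF iS] by (auto simp: Si_def)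
  have invR: "matrix_inv R = Si ** Si"
  proof (rule inv_unique(1))
    have "R ** (Si ** Si) = S ** (S ** Si) ** Si" by (simp add: SS[symmetric] matrix_mul_assoc)
    also have "\<dots> = mat 1" by (simp add: SSi)
    finally show "R ** (Si ** Si) = mat 1" .
  qed
  have sqP: "mat_sqrt (S ** P ** S) = S ** M ** S"
  proof (rule sqrt_congr[OF hS pd_psd[OF pM]])
    have "M ** (S ** S) ** M = (M ** Mi) ** P ** (Mi ** M)" by (simp add: SS R_def matrix_mul_assoc)
    thus "M ** (S ** S) ** M = P" by (simp add: MMi)
  qed
  have sqQ: "mat_sqrt (S ** Q ** S) = S ** Y ** S"
  proof (rule sqrt_congr[OF hS pd_psd[OF pY]])
    have "Y ** (S ** S) ** Y = (Ti ** M) ** (Mi ** P ** Mi) ** (M ** Ti)"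
      by (simp add: SS R_def YM1 YM2)
    also have "\<dots> = Ti ** (M ** Mi) ** P ** (Mi ** M) ** Ti" by (simp add: matrix_mul_assoc)
    also have "\<dots> = Q" by (simp add: MMi Qeq)
    finally show "Y ** (S ** S) ** Y = Q" .
  qed
  have lhs: "gen_fidelity R P Q = trace (P ** Ti)"
  proof -
    have "gen_fidelity R P Q = trace (S ** M ** S ** (Si ** Si) ** (S ** Y ** S))"
      by (simp add: gen_fidelity_def S_def[symmetric] sqP sqQ invR)
    also have "S ** M ** S ** (Si ** Si) ** (S ** Y ** S) = S ** M ** (S ** Si) ** (Si ** S) ** Y ** S"
      by (simp add: matrix_mul_assoc)
    also have "\<dots> = (S ** M ** Y) ** S" by (simp add: SSi)
    also have "trace \<dots> = trace (S ** (S ** M ** Y))" by (rule trace_mul_sym)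
    also have "S ** (S ** M ** Y) = Mi ** P ** (Mi ** M) ** Ti ** M"
      by (simp add: SS[symmetric] matrix_mul_assoc YM2[symmetric]) (simp add: SS R_def matrix_mul_assoc)
    also have "\<dots> = (Mi ** P ** Ti) ** M" by (simp add: MMi)
    also have "trace \<dots> = trace (M ** (Mi ** P ** Ti))" by (rule trace_mul_sym)
    also have "M ** (Mi ** P ** Ti) = (M ** Mi) ** P ** Ti" by (simp add: matrix_mul_assoc)
    also have "\<dots> = P ** Ti" by (simp add: MMi)
    finally show ?thesis .
  qed
  define Ph where "Ph = mat_sqrt P"
  have pPh: "pos_def_mat Ph" and PhPh: "Ph ** Ph = P" using sqrt_pd[OF pP] by (auto simp: Ph_def)
  have sqU: "mat_sqrt (Ph ** Q ** Ph) = Ph ** Ti ** Ph"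
  proof (rule sqrt_congr[OF pd_herm[OF pPh] pd_psd[OF pTi]])
    show "Ti ** (Ph ** Ph) ** Ti = Q" by (simp add: PhPh Qeq)
  qed
  have rhs: "uhlmann_fidelity P Q = trace (P ** Ti)"
  proof -
    have "uhlmann_fidelity P Q = trace ((Ph ** Ti) ** Ph)"
      by (simp add: uhlmann_fidelity_def Ph_def[symmetric] sqU)
    also have "\<dots> = trace (Ph ** (Ph ** Ti))" by (rule trace_mul_sym)
    also have "\<dots> = trace (P ** Ti)" by (simp add: matrix_mul_assoc PhPh)
    finally show ?thesis .
  qed
  show ?thesis using lhs rhs by (simp add: bw Req)
qed


end
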